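(* Let $\mathcal C$ be an $(n,k,r,3)$-SLRC, let $G=([n],\mathcal E)$ be a minimal repair graph of $\mathcal C$, and let $B$, $C_1$ and $\mathcal E_{\mathrm{blue}}$ be as defined in the context. Then $$|\mathcal E_{\mathrm{blue}}|\ge\frac{|B|+|C_1|}{r}.$$
   Context: For an $[n,k]$ linear code $\mathcal C$ over a finite field $\mathbb F$, a recovering set of $i\in[n]$ is a set $R\subseteq[n]\setminus\{i\}$ with nonzero $a_j\in\mathbb F$ such that $x_i=\sum_{j\in R}a_jx_j$ for all $x\in\mathcal C$; standing assumption: recovering sets have size $2\le|R|\le r<k$. $\mathcal C$ is an $(n,k,r,t)$-SLRC if every $E\subseteq[n]$ with $|E|\le t$ can be indexed $\{i_1,\dots,i_{|E|}\}$ so that each $i_\ell$ has a recovering set $R_\ell\subseteq([n]\setminus E)\cup\{i_1,\dots,i_{\ell-1}\}$. A repair graph of $\mathcal C$ is a directed acyclic graph on vertex set $[n]$ such that for every vertex $i$ with nonempty in-neighbourhood $\mathrm{In}(i)$, $\mathrm{In}(i)$ is a recovering set of $i$. A source is a vertex with no in-neighbours; $S(G)$ is the set of sources. A minimal repair graph is a repair graph with the minimum number of sources among all repair graphs of $\mathcal C$. $\mathrm{Out}(v)$ is the set of out-neighbours of $v$ and $\mathrm{Out}^2(v)=\bigcup_{u\in\mathrm{Out}(v)}\mathrm{Out}(u)\setminus\mathrm{Out}(v)$. Define $B=\{v\in S(G):|\mathrm{Out}(v)|=2\}$, $C_1=\{v\in S(G):|\mathrm{Out}(v)|=1,\ |\mathrm{Out}^2(v)|=1\}$,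 $C_2=\{v\in S(G):|\mathrm{Out}(v)|=1,\ |\mathrm{Out}^2(v)|\ge2\}$. An edge is green if its tail is the unique out-neighbour of some source in $C_1\cup C_2$. For $v\in B\cup C_1$, a non-green edge $e$ is a blue edge belonging to $v$ if either $v\in B$ and the tail of $e$ lies in $\mathrm{Out}(v)$, or $v\in C_1$ and the tail of $e$ lies in $\mathrm{Out}^2(v)$. $\mathcal E_{\mathrm{blue}}$ is the set of all edges that are blue edges belonging to some $v\in B\cup C_1$. *)

theory Defs
  imports "HOL-Analysis.Analysis"
begin

text \<open>Coordinates [n] are modelled by a finite type 'n (n = CARD('n)); codewords are
  vectors in 'f^'n for a field 'f. A code is a linear subspace of 'f^'n.\<close>

definition recovering_set :: "('f::field ^ 'n::finite) set \<Rightarrow> nat \<Rightarrow> 'n \<Rightarrow> 'n set \<Rightarrow> bool" where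
  "recovering_set C r i R \<longleftrightarrow>
     R \<subseteq> UNIV - {i} \<and> 2 \<le> card R \<and> card R \<le> r \<and>
     (\<exists>a :: 'n \<Rightarrow> 'f. (\<forall>j\<in>R. a j \<noteq> 0) \<and> (\<forall>x\<in>C. x $ i = (\<Sum>j\<in>R. a j * x $ j)))"

definition linear_code :: "('f::field ^ 'n::finite) set \<Rightarrow> nat \<Rightarrow> bool" where
  "linear_code C k \<longleftrightarrow> vec.subspace C \<and> vec.dim C = k"

definition is_SLRC :: "('f::field ^ 'n::finite) set \<Rightarrow> nat \<Rightarrow> nat \<Rightarrow> nat \<Rightarrow> bool" where
  "is_SLRC C k r t \<longleftrightarrow> linear_code C k \<and> r < k \<and>
     (\<forall>E :: 'n set. card E \<le> t \<longrightarrow>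
        (\<exists>es. distinct es \<and> set es = E \<and>
           (\<forall>l < length es. \<exists>R. recovering_set C r (es ! l) R \<and>
                R \<subseteq> (UNIV - E) \<union> set (take l es))))"

definition In_nb :: "('n \<times> 'n) set \<Rightarrow> 'n \<Rightarrow> 'n set" where
  "In_nb G i = {j. (j, i) \<in> G}"

definition Out_nb :: "('n \<times> 'n) set \<Rightarrow> 'n \<Rightarrow> 'n set" where
  "Out_nb G v = {u. (v, u) \<in> G}"

definition Out2_nb :: "('n \<times> 'n) set \<Rightarrow> 'n \<Rightarrow> 'n set" where
  "Out2_nb G v = (\<Union>u\<in>Out_nb G v. Out_nb G u) - Out_nb G v"

definition is_repair_graph :: "('f::field ^ 'n::finite) set \<Rightarrow> nat \<Rightarrow> ('n \<times> 'n) set \<Rightarrow> bool" where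
  "is_repair_graph C r G \<longleftrightarrow> acyclic G \<and>
     (\<forall>i. In_nb G i \<noteq> {} \<longrightarrow> recovering_set C r i (In_nb G i))"

definition sources :: "('n \<times> 'n) set \<Rightarrow> 'n set" where
  "sources G = {v. In_nb G v = {}}"

definition is_minimal_repair_graph :: "('f::field ^ 'n::finite) set \<Rightarrow> nat \<Rightarrow> ('n \<times> 'n) set \<Rightarrow> bool" where
  "is_minimal_repair_graph C r G \<longleftrightarrow> is_repair_graph C r G \<and>
     (\<forall>G'. is_repair_graph C r G' \<longrightarrow> card (sources G) \<le> card (sources G'))"

definition B_set :: "('n \<times> 'n) set \<Rightarrow> 'n set" where
  "B_set G = {v \<in> sources G. card (Out_nb G v) = 2}"

definition C1_set :: "('n \<times> 'n) set \<Rightarrow> 'n set" where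
  "C1_set G = {v \<in> sources G. card (Out_nb G v) = 1 \<and> card (Out2_nb G v) = 1}"

definition C2_set :: "('n \<times> 'n) set \<Rightarrow> 'n set" where
  "C2_set G = {v \<in> sources G. card (Out_nb G v) = 1 \<and> card (Out2_nb G v) \<ge> 2}"

definition green_edge :: "('n \<times> 'n) set \<Rightarrow> 'n \<times> 'n \<Rightarrow> bool" where
  "green_edge G e \<longleftrightarrow> e \<in> G \<and> (\<exists>v \<in> C1_set G \<union> C2_set G. Out_nb G v = {fst e})"

definition blue_edge_of :: "('n \<times> 'n) set \<Rightarrow> 'n \<Rightarrow> 'n \<times> 'n \<Rightarrow> bool" where
  "blue_edge_of G v e \<longleftrightarrow> e \<in> G \<and> \<not> green_edge G e \<and>
     ((v \<in> B_set G \<and> fst e \<in> Out_nb G v) \<or> (v \<in> C1_set G \<and> fst e \<in> Out2_nb G v))"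

definition blue_edges :: "('n \<times> 'n) set \<Rightarrow> ('n \<times> 'n) set" where
  "blue_edges G = {e. \<exists>v \<in> B_set G \<union> C1_set G. blue_edge_of G v e}"

end

theory Submission
  imports Defs
begin


lemma acyclic_by_rank:
  fixes f :: "'a \<Rightarrow> nat"
  assumes "\<And>x y. (x,y) \<in> R \<Longrightarrow> f x < f y"
  shows "acyclic R"
proof -
  have "(x,y) \<in> R\<^sup>+ \<Longrightarrow> f x < f y" for x y
    by (induction rule: trancl_induct) (auto dest: assms)
  then show ?thesis unfolding acyclic_def by blast
qed

definition hrank :: "('n::finite \<times> 'n) set \<Rightarrow> 'n \<Rightarrow> nat" where
  "hrank G y = card {x. (x,y) \<in> G\<^sup>+}"

lemma hrank_less:
  fixes G :: "('n::finite \<times> 'n) set"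
  assumes "acyclic G" "(x,y) \<in> G"
  shows "hrank G x < hrank G y"
proof -
  have "insert x {z. (z,x) \<in> G\<^sup>+} \<subseteq> {z. (z,y) \<in> G\<^sup>+}"
    using assms(2) by (auto intro: trancl_into_trancl)
  moreover have "x \<notin> {z. (z,x) \<in> G\<^sup>+}" using assms(1) unfolding acyclic_def by auto
  ultimately have "card (insert x {z. (z,x) \<in> G\<^sup>+}) \<le> card {z. (z,y) \<in> G\<^sup>+}"
    by (intro card_mono) auto
  moreover have "card (insert x {z. (z,x) \<in> G\<^sup>+}) = Suc (hrank G x)"
    using \<open>x \<notin> _\<close> unfolding hrank_def by simp
  ultimately show ?thesis unfolding hrank_def by simp
qed

lemma hrank_le:
  fixes G :: "('n::finite \<times> 'n) set"
  shows "hrank G y \<le> CARD('n)"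
  unfolding hrank_def by (rule card_mono) auto

lemma acyclic_neq:
  assumes "acyclic G" "(x,y) \<in> G" shows "x \<noteq> y"
  using assms unfolding acyclic_def by auto

lemma In_Out: "x \<in> In_nb G y \<longleftrightarrow> y \<in> Out_nb G x"
  unfolding In_nb_def Out_nb_def by simp

lemma sources_iff: "v \<in> sources G \<longleftrightarrow> (\<forall>x. (x,v) \<notin> G)"
  unfolding sources_def In_nb_def by auto



definition swapG :: "('n \<times> 'n) set \<Rightarrow> 'n \<Rightarrow> 'n \<Rightarrow> ('n \<times> 'n) set" where
  "swapG G s w = {e\<in>G. snd e \<noteq> w} \<union> (\<lambda>j. (j,s)) ` (insert w (In_nb G w - {s}))"

lemma swap_In:
  assumes "s \<in> sources G" "s \<noteq> w"
  shows "In_nb (swapG G s w) y =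
     (if y = w then {} else if y = s then insert w (In_nb G w - {s}) else In_nb G y)"
  using assms unfolding swapG_def In_nb_def sources_def by auto

lemma swap_Out:
  assumes "Out_nb G s = {w}"
  shows "Out_nb (swapG G s w) y =
     Out_nb G y - {w} \<union> (if y \<in> insert w (In_nb G w - {s}) then {s} else {})"
  using assms unfolding swapG_def In_nb_def Out_nb_def by auto

lemma swap_recov:
  fixes C :: "('f::field ^ 'n::finite) set"
  assumes rec: "recovering_set C r w R" and sR: "s \<in> R"
  shows "recovering_set C r s (insert w (R - {s}))"
proof -
  from rec have RS: "R \<subseteq> UNIV - {w}" "2 \<le> card R" "card R \<le> r"
    and "\<exists>a :: 'n \<Rightarrow> 'f. (\<forall>j\<in>R. a j \<noteq> 0) \<and> (\<forall>x\<in>C. x $ w = (\<Sum>j\<in>R. a j * x $ j))"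
    unfolding recovering_set_def by auto
  then obtain a :: "'n \<Rightarrow> 'f" where a0: "\<forall>j\<in>R. a j \<noteq> 0"
    and aeq: "\<forall>x\<in>C. x $ w = (\<Sum>j\<in>R. a j * x $ j)" by blast
  have ws: "w \<noteq> s" using RS sR by auto
  have wR: "w \<notin> R - {s}" using RS by auto
  have fin: "finite R" by simp
  have card: "card (insert w (R - {s})) = card R"
    using wR sR fin RS(2) by (simp add: card_Diff_singleton)
  define b where "b j = (if j = w then inverse (a s) else - a j / a s)" for j
  have as: "a s \<noteq> 0" using a0 sR by auto
  have b0: "\<forall>j\<in>insert w (R - {s}). b j \<noteq> 0"
    using a0 as unfolding b_def by auto
  have beq: "x $ s = (\<Sum>j\<in>insert w (R - {s}). b j * x $ j)" if "x \<in> C" for x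
  proof -
    have "x $ w = a s * x $ s + (\<Sum>j\<in>R - {s}. a j * x $ j)"
      using aeq that sR fin by (simp add: sum.remove)
    moreover have "(\<Sum>j\<in>insert w (R - {s}). b j * x $ j)
        = b w * x $ w + (\<Sum>j\<in>R - {s}. b j * x $ j)"
      using wR fin by simp
    moreover have "(\<Sum>j\<in>R - {s}. b j * x $ j) = - (\<Sum>j\<in>R - {s}. a j * x $ j) / a s"
    proof -
      have "(\<Sum>j\<in>R - {s}. b j * x $ j) = (\<Sum>j\<in>R - {s}. - (a j * x $ j) / a s)"
        by (rule sum.cong) (use wR in \<open>auto simp: b_def\<close>)
      also have "\<dots> = - (\<Sum>j\<in>R - {s}. a j * x $ j) / a s"
        by (simp add: sum_divide_distrib sum_negf)
      finally show ?thesis .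
    qed
    ultimately show ?thesis using as unfolding b_def
      by (simp add: field_simps)
  qed
  show ?thesis unfolding recovering_set_def
    using ws RS card b0 beq by (auto intro!: exI[of _ b])
qed

lemma swap_repair:
  fixes C :: "('f::field ^ 'n::finite) set" and G :: "('n \<times> 'n) set"
  assumes rep: "is_repair_graph C r G" and s: "s \<in> sources G" and o: "Out_nb G s = {w}"
  shows "is_repair_graph C r (swapG G s w)"
    and "sources (swapG G s w) = insert w (sources G - {s})"
    and "w \<notin> sources G"
proof -
  have ac: "acyclic G" using rep unfolding is_repair_graph_def by auto
  have sw: "(s,w) \<in> G" using o unfolding Out_nb_def by auto
  have ws: "s \<noteq> w" using acyclic_neq[OF ac sw] .
  have wIn: "s \<in> In_nb G w" using sw unfolding In_nb_def by auto
  show ws': "w \<notin> sources G" using wIn unfolding sources_def by auto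
  have recw: "recovering_set C r w (In_nb G w)" using rep wIn unfolding is_repair_graph_def by auto
  note IN = swap_In[OF s ws]
  have acy: "acyclic (swapG G s w)"
  proof (rule acyclic_by_rank[where f = "\<lambda>y. if y = s then Suc (CARD('n)) else hrank G y"])
    fix x y assume e: "(x,y) \<in> swapG G s w"
    show "(if x = s then Suc (CARD('n)) else hrank G x) < (if y = s then Suc (CARD('n)) else hrank G y)"
    proof (cases "y = s")
      case True
      have "x \<noteq> s" using e ws True s unfolding swapG_def In_nb_def sources_iff by auto
      then show ?thesis using True hrank_le[of G x] by simp
    next
      case False
      then have "(x,y) \<in> G" "y \<noteq> w" using e unfolding swapG_def by auto
      moreover have "x \<noteq> s"
      proof
        assume "x = s"
        then have "y \<in> Out_nb G s" using \<open>(x,y) \<in> G\<close> unfolding Out_nb_def by auto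
        then show False using o \<open>y \<noteq> w\<close> by auto
      qed
      ultimately show ?thesis using False hrank_less[OF ac] by simp
    qed
  qed
  show "is_repair_graph C r (swapG G s w)"
    unfolding is_repair_graph_def
  proof (intro conjI allI impI acy)
    fix i assume ne: "In_nb (swapG G s w) i \<noteq> {}"
    show "recovering_set C r i (In_nb (swapG G s w) i)"
    proof (cases "i = s")
      case True
      then show ?thesis using IN swap_recov[OF recw wIn] ws by simp
    next
      case False
      then have "i \<noteq> w" using ne IN by auto
      then show ?thesis using False ne IN rep unfolding is_repair_graph_def by auto
    qed
  qed
  show "sources (swapG G s w) = insert w (sources G - {s})"
    using IN s ws unfolding sources_def by auto
qed

lemma swap_minimal:
  fixes C :: "('f::field ^ 'n::finite) set" and G :: "('n \<times> 'n) set"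
  assumes m: "is_minimal_repair_graph C r G" and s: "s \<in> sources G" and o: "Out_nb G s = {w}"
  shows "is_minimal_repair_graph C r (swapG G s w)"
proof -
  have rep: "is_repair_graph C r G" using m unfolding is_minimal_repair_graph_def by auto
  note sr = swap_repair[OF rep s o]
  have "card (sources (swapG G s w)) = card (sources G)"
  proof -
    have "card (insert w (sources G - {s})) = Suc (card (sources G - {s}))"
      using sr(3) by simp
    also have "\<dots> = card (sources G)"
      using s by (simp add: card_Diff_singleton card_gt_0_iff) (metis Suc_pred card_gt_0_iff empty_iff finite)
    finally show ?thesis using sr(2) by simp
  qed
  then show ?thesis using m sr(1) unfolding is_minimal_repair_graph_def by auto
qed



lemma closed_contra:
  fixes C :: "('f::field ^ 'n::finite) set" and G :: "('n \<times> 'n) set"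
  assumes slrc: "is_SLRC C k r 3" and m: "is_minimal_repair_graph C r G"
    and cE: "card E \<le> 3" and cl: "\<forall>p\<in>E. Out_nb G p \<subseteq> E"
    and vE: "v \<in> E" and vs: "v \<in> sources G"
  shows False
proof -
  have rep: "is_repair_graph C r G" using m unfolding is_minimal_repair_graph_def by auto
  have ac: "acyclic G" using rep unfolding is_repair_graph_def by auto
  from slrc cE obtain es where d: "distinct es" and se: "set es = E"
    and rs: "\<forall>l < length es. \<exists>R. recovering_set C r (es ! l) R \<and>
                R \<subseteq> (UNIV - E) \<union> set (take l es)"
    unfolding is_SLRC_def by blast
  from rs obtain Rf where Rf: "\<And>l. l < length es \<Longrightarrow> recovering_set C r (es ! l) (Rf l) \<and>
                Rf l \<subseteq> (UNIV - E) \<union> set (take l es)"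
    by metis
  define G' where "G' = {e\<in>G. snd e \<notin> E} \<union> {(j, es ! l) | j l. l < length es \<and> j \<in> Rf l}"
  have nth_inj: "\<And>l l'. l < length es \<Longrightarrow> l' < length es \<Longrightarrow> es ! l = es ! l' \<Longrightarrow> l = l'"
    using d by (simp add: nth_eq_iff_index_eq)
  have In1: "In_nb G' y = In_nb G y" if "y \<notin> E" for y
    using that se unfolding G'_def In_nb_def by auto
  have In2: "In_nb G' (es ! l) = Rf l" if "l < length es" for l
  proof -
    have "es ! l \<in> E" using that se by auto
    show ?thesis
    proof
      show "In_nb G' (es ! l) \<subseteq> Rf l"
      proof
        fix j assume "j \<in> In_nb G' (es ! l)"
        then have "(j, es ! l) \<in> G'" unfolding In_nb_def by simp
        then obtain l' where "l' < length es" "es ! l = es ! l'" "j \<in> Rf l'"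
          using \<open>es ! l \<in> E\<close> unfolding G'_def by auto
        then show "j \<in> Rf l" using nth_inj[OF that, of l'] by simp
      qed
      show "Rf l \<subseteq> In_nb G' (es ! l)" using that unfolding G'_def In_nb_def by blast
    qed
  qed
  have Ene: "In_nb G' y \<noteq> {}" if "y \<in> E" for y
  proof -
    have "y \<in> set es" using that se by simp
    then obtain l where l: "l < length es" "y = es ! l" by (auto simp: in_set_conv_nth)
    have "2 \<le> card (Rf l)" using Rf[OF l(1)] unfolding recovering_set_def by auto
    then have "Rf l \<noteq> {}" by auto
    then show ?thesis using In2 l by auto
  qed
  define M where "M = Suc (CARD('n))"
  define idx where "idx y = (LEAST l. l < length es \<and> es ! l = y)" for y
  have idx: "idx (es ! l) = l" if "l < length es" for l
  proof -
    have "l < length es \<and> es!l = es!l" using that by simp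
    moreover have "\<And>y. y < length es \<and> es!y = es!l \<Longrightarrow> l \<le> y"
      using nth_inj that by (metis order.refl)
    ultimately show ?thesis unfolding idx_def by (rule Least_equality)
  qed
  define f where "f y = (if y \<in> E then M + idx y else hrank G y)" for y
  have acy: "acyclic G'"
  proof (rule acyclic_by_rank[of G' f])
    fix x y assume e: "(x,y) \<in> G'"
    show "f x < f y"
    proof (cases "(x,y) \<in> G \<and> y \<notin> E")
      case True
      then have "x \<notin> E" using cl unfolding Out_nb_def by auto
      then show ?thesis using True hrank_less[OF ac] unfolding f_def by auto
    next
      case False
      then obtain l where l: "l < length es" "y = es ! l" "x \<in> Rf l"
        using e unfolding G'_def by auto
      have yE: "y \<in> E" using l se by (metis nth_mem)
      have fy: "f y = M + l" using yE idx l unfolding f_def by simp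
      from Rf[OF l(1)] l(3) have "x \<in> (UNIV - E) \<union> set (take l es)" by auto
      then show ?thesis
      proof
        assume "x \<in> UNIV - E"
        then show ?thesis using fy hrank_le[of G x] unfolding f_def M_def by auto
      next
        assume "x \<in> set (take l es)"
        then obtain m where m: "m < length (take l es)" "x = take l es ! m"
          by (auto simp: in_set_conv_nth)
        then have "m < l" "m < length es" "x = es ! m" by auto
        moreover have "x \<in> E" using \<open>m < length es\<close> \<open>x = es ! m\<close> se by auto
        ultimately have "f x = M + m" using idx[of m] unfolding f_def by simp
        then show ?thesis using fy \<open>m < l\<close> by simp
      qed
    qed
  qed
  have rep': "is_repair_graph C r G'"
    unfolding is_repair_graph_def
  proof (intro conjI allI impI acy)
    fix i assume ne: "In_nb G' i \<noteq> {}"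
    show "recovering_set C r i (In_nb G' i)"
    proof (cases "i \<in> E")
      case True
      then have "i \<in> set es" using se by simp
      then obtain l where l: "l < length es" "i = es ! l" by (auto simp: in_set_conv_nth)
      then show ?thesis using In2[OF l(1)] Rf[OF l(1)] l(2) by simp
    next
      case False
      then show ?thesis using In1[OF False] ne rep unfolding is_repair_graph_def by metis
    qed
  qed
  have "sources G' \<subseteq> sources G - {v}"
    using Ene In1 vE unfolding sources_def by auto
  then have "card (sources G') < card (sources G)"
  proof -
    have "card (sources G') \<le> card (sources G - {v})" using \<open>sources G' \<subseteq> _\<close> by (rule card_mono[rotated]) simp
    also have "\<dots> < card (sources G)" using vs by (rule card_Diff1_less[rotated]) simp
    finally show ?thesis .
  qed
  moreover have "card (sources G) \<le> card (sources G')"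
    using m rep' unfolding is_minimal_repair_graph_def by auto
  ultimately show False by simp
qed



lemma key_contra:
  fixes C :: "('f::field ^ 'n::finite) set"
  assumes slrc: "is_SLRC C k r 3"
  shows "\<And>G D. is_minimal_repair_graph C r G \<Longrightarrow> card D \<le> 3 \<Longrightarrow> v \<in> D \<Longrightarrow> v \<in> sources G \<Longrightarrow>
    (\<forall>p\<in>D. Out_nb G p \<subseteq> D \<or> (p \<noteq> v \<and> (\<exists>s\<in>sources G. s \<notin> D \<and> Out_nb G s = {p}))) \<Longrightarrow> False"
proof -
  fix G :: "('n \<times> 'n) set" and D
  show "is_minimal_repair_graph C r G \<Longrightarrow> card D \<le> 3 \<Longrightarrow> v \<in> D \<Longrightarrow> v \<in> sources G \<Longrightarrow>
    (\<forall>p\<in>D. Out_nb G p \<subseteq> D \<or> (p \<noteq> v \<and> (\<exists>s\<in>sources G. s \<notin> D \<and> Out_nb G s = {p}))) \<Longrightarrow> False"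
  proof (induction "card {p\<in>D. \<not> Out_nb G p \<subseteq> D}" arbitrary: G D rule: less_induct)
    case less
    note m = less.prems(1) and cD = less.prems(2) and vD = less.prems(3) and vs = less.prems(4)
      and cond = less.prems(5)
    show False
    proof (cases "\<forall>p\<in>D. Out_nb G p \<subseteq> D")
      case True
      show False by (rule closed_contra[OF slrc m cD True vD vs])
    next
      case False
      then obtain p where pD: "p \<in> D" and pnc: "\<not> Out_nb G p \<subseteq> D" by blast
      with cond obtain s where pv: "p \<noteq> v" and ss: "s \<in> sources G" and sD: "s \<notin> D"
        and os: "Out_nb G s = {p}" by blast
      have rep: "is_repair_graph C r G" using m unfolding is_minimal_repair_graph_def by auto
      note sr = swap_repair[OF rep ss os]
      define G1 where "G1 = swapG G s p"
      define D1 where "D1 = insert s (D - {p})"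
      have m1: "is_minimal_repair_graph C r G1" unfolding G1_def by (rule swap_minimal[OF m ss os])
      have src1: "sources G1 = insert p (sources G - {s})" unfolding G1_def using sr(2) .
      have OUT: "Out_nb G1 y = Out_nb G y - {p} \<union> (if y \<in> insert p (In_nb G p - {s}) then {s} else {})" for y
        unfolding G1_def using swap_Out[OF os] .
      have Os: "Out_nb G1 s = {}"
      proof -
        have "s \<noteq> p" using sr(3) ss by auto
        moreover have "s \<notin> In_nb G p - {s}" by simp
        ultimately show ?thesis using OUT[of s] os by auto
      qed
      have cD1: "card D1 \<le> 3"
      proof -
        have "card D1 \<le> Suc (card (D - {p}))" unfolding D1_def by (simp add: card_insert_le_m1)
        also have "\<dots> = card D" using pD by (simp add: card_Diff_singleton card_gt_0_iff) (metis Suc_pred card_gt_0_iff empty_iff finite pD)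
        finally show ?thesis using cD by simp
      qed
      have vD1: "v \<in> D1" using vD pv unfolding D1_def by auto
      have vs1: "v \<in> sources G1" using vs src1 sD vD by auto
      have clpres: "Out_nb G1 q \<subseteq> D1" if "q \<in> D" "Out_nb G q \<subseteq> D" for q
        using that OUT[of q] unfolding D1_def by auto
      have cond1: "\<forall>q\<in>D1. Out_nb G1 q \<subseteq> D1 \<or> (q \<noteq> v \<and> (\<exists>s'\<in>sources G1. s' \<notin> D1 \<and> Out_nb G1 s' = {q}))"
      proof
        fix q assume qD1: "q \<in> D1"
        show "Out_nb G1 q \<subseteq> D1 \<or> (q \<noteq> v \<and> (\<exists>s'\<in>sources G1. s' \<notin> D1 \<and> Out_nb G1 s' = {q}))"
        proof (cases "q = s")
          case True then show ?thesis using Os by auto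
        next
          case False
          then have qD: "q \<in> D" "q \<noteq> p" using qD1 unfolding D1_def by auto
          show ?thesis
          proof (cases "Out_nb G q \<subseteq> D")
            case True then show ?thesis using clpres qD by auto
          next
            case False
            with cond qD obtain s' where qv: "q \<noteq> v" and s's: "s' \<in> sources G" and s'D: "s' \<notin> D"
              and os': "Out_nb G s' = {q}" by blast
            have s's1: "s' \<noteq> s" using os os' qD(2) by auto
            have s'p: "s' \<noteq> p" using sr(3) s's by auto
            have "s' \<notin> In_nb G p" using os' qD(2) In_Out[of s' G p] by auto
            then have "Out_nb G1 s' = {q}" using OUT[of s'] os' qD(2) s'p by auto
            moreover have "s' \<in> sources G1" using src1 s's s's1 by auto
            moreover have "s' \<notin> D1" using s'D s's1 unfolding D1_def by auto
            ultimately show ?thesis using qv by blast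
          qed
        qed
      qed
      have sub: "{q\<in>D1. \<not> Out_nb G1 q \<subseteq> D1} \<subseteq> {q\<in>D. \<not> Out_nb G q \<subseteq> D} - {p}"
      proof
        fix q assume "q \<in> {q\<in>D1. \<not> Out_nb G1 q \<subseteq> D1}"
        then have qD1: "q \<in> D1" and nc: "\<not> Out_nb G1 q \<subseteq> D1" by auto
        then have "q \<noteq> s" using Os by auto
        then have "q \<in> D" "q \<noteq> p" using qD1 unfolding D1_def by auto
        then show "q \<in> {q\<in>D. \<not> Out_nb G q \<subseteq> D} - {p}" using clpres nc by auto
      qed
      have lt: "card {q\<in>D1. \<not> Out_nb G1 q \<subseteq> D1} < card {p\<in>D. \<not> Out_nb G p \<subseteq> D}"
      proof -
        have "card {q\<in>D1. \<not> Out_nb G1 q \<subseteq> D1} \<le> card ({q\<in>D. \<not> Out_nb G q \<subseteq> D} - {p})"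
          using sub by (rule card_mono[rotated]) simp
        also have "\<dots> < card {p\<in>D. \<not> Out_nb G p \<subseteq> D}"
          using pD pnc by (intro card_Diff1_less) auto
        finally show ?thesis .
      qed
      show False using less.hyps[OF lt m1 cD1 vD1 vs1 cond1] .
    qed
  qed
qed



lemma green_src:
  assumes "green_edge G e"
  shows "\<exists>s\<in>sources G. Out_nb G s = {fst e}"
  using assms unfolding green_edge_def C1_set_def C2_set_def by auto

lemma card3: "card {a,b,c::'a} \<le> 3"
  by (auto simp: card_insert_if)

lemma nonsource: "(x,y) \<in> G \<Longrightarrow> y \<notin> sources G"
  unfolding sources_iff by auto

lemma two_sources:
  fixes C :: "('f::field ^ 'n::finite) set" and G :: "('n \<times> 'n) set"
  assumes slrc: "is_SLRC C k r 3" and m: "is_minimal_repair_graph C r G"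
    and v1: "v1 \<in> sources G" and v2: "v2 \<in> sources G" and ne: "v1 \<noteq> v2"
    and o1: "Out_nb G v1 = {x}" and o2: "Out_nb G v2 = {x}"
  shows False
proof -
  have e1: "(v1,x) \<in> G" using o1 unfolding Out_nb_def by auto
  have xs: "x \<notin> sources G" using nonsource[OF e1] .
  have "card {v2, x} \<le> 3" by (auto simp: card_insert_if)
  moreover have "\<forall>p\<in>{v2,x}. Out_nb G p \<subseteq> {v2,x} \<or> (p \<noteq> v2 \<and> (\<exists>s\<in>sources G. s \<notin> {v2,x} \<and> Out_nb G s = {p}))"
    using o2 o1 v1 ne xs v2 by auto
  ultimately show False using key_contra[OF slrc m, of "{v2,x}" v2] v2 by auto
qed

lemma blue_exists:
  fixes C :: "('f::field ^ 'n::finite) set" and G :: "('n \<times> 'n) set"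
  assumes slrc: "is_SLRC C k r 3" and m: "is_minimal_repair_graph C r G"
    and vBC: "v \<in> B_set G \<union> C1_set G"
  shows "\<exists>e. blue_edge_of G v e"
proof (rule ccontr)
  assume nb: "\<not> (\<exists>e. blue_edge_of G v e)"
  have rep: "is_repair_graph C r G" using m unfolding is_minimal_repair_graph_def by auto
  have ac: "acyclic G" using rep unfolding is_repair_graph_def by auto
  have vs: "v \<in> sources G" using vBC unfolding B_set_def C1_set_def by auto
  show False
  proof (cases "v \<in> B_set G")
    case True
    then have "card (Out_nb G v) = 2" unfolding B_set_def by auto
    then obtain a b where ab: "a \<noteq> b" "Out_nb G v = {a,b}" by (auto simp: card_2_iff)
    have ea: "(v,a) \<in> G" and eb: "(v,b) \<in> G" using ab unfolding Out_nb_def by auto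
    define D where "D = {v,a,b}"
    have cD: "card D \<le> 3" unfolding D_def
      by (rule card3)
    have cond: "\<forall>p\<in>D. Out_nb G p \<subseteq> D \<or> (p \<noteq> v \<and> (\<exists>s\<in>sources G. s \<notin> D \<and> Out_nb G s = {p}))"
    proof
      fix p assume pD: "p \<in> D"
      show "Out_nb G p \<subseteq> D \<or> (p \<noteq> v \<and> (\<exists>s\<in>sources G. s \<notin> D \<and> Out_nb G s = {p}))"
      proof (cases "p = v")
        case True then show ?thesis using ab unfolding D_def by auto
      next
        case False
        then have pab: "p \<in> Out_nb G v" using pD ab unfolding D_def by auto
        show ?thesis
        proof (cases "Out_nb G p \<subseteq> D")
          case True then show ?thesis by simp
        next
          case nc: False
          then obtain q where "q \<in> Out_nb G p" by auto
          then have eq: "(p,q) \<in> G" unfolding Out_nb_def by auto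
          have "green_edge G (p,q)"
            using nb eq \<open>v \<in> B_set G\<close> pab unfolding blue_edge_of_def by auto
          then obtain s where ss: "s \<in> sources G" and os: "Out_nb G s = {p}"
            using green_src by fastforce
          have "s \<noteq> v" using os ab by (metis doubleton_eq_iff insert_absorb2)
          moreover have "s \<noteq> a" "s \<noteq> b" using ss nonsource[OF ea] nonsource[OF eb] by auto
          ultimately have "s \<notin> D" unfolding D_def by auto
          then show ?thesis using False ss os by auto
        qed
      qed
    qed
    show False using key_contra[OF slrc m cD _ vs cond] unfolding D_def by auto
  next
    case False
    then have vC: "v \<in> C1_set G" using vBC by auto
    then have "card (Out_nb G v) = 1" and c2: "card (Out2_nb G v) = 1" unfolding C1_set_def by auto
    then obtain x where ox: "Out_nb G v = {x}" by (auto simp: card_1_singleton_iff)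
    have ex: "(v,x) \<in> G" using ox unfolding Out_nb_def by auto
    have "Out2_nb G v = Out_nb G x - {x}" unfolding Out2_nb_def ox by simp
    also have "\<dots> = Out_nb G x" using acyclic_neq[OF ac] unfolding Out_nb_def by auto
    finally have o2: "Out2_nb G v = Out_nb G x" .
    then obtain u where ou: "Out_nb G x = {u}" using c2 by (auto simp: card_1_singleton_iff)
    have eu: "(x,u) \<in> G" using ou unfolding Out_nb_def by auto
    define D where "D = {v,x,u}"
    have cD: "card D \<le> 3" unfolding D_def
      by (rule card3)
    have cond: "\<forall>p\<in>D. Out_nb G p \<subseteq> D \<or> (p \<noteq> v \<and> (\<exists>s\<in>sources G. s \<notin> D \<and> Out_nb G s = {p}))"
    proof
      fix p assume pD: "p \<in> D"
      show "Out_nb G p \<subseteq> D \<or> (p \<noteq> v \<and> (\<exists>s\<in>sources G. s \<notin> D \<and> Out_nb G s = {p}))"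
      proof (cases "p = u")
        case False then show ?thesis using pD ox ou unfolding D_def by auto
      next
        case True
        show ?thesis
        proof (cases "Out_nb G p \<subseteq> D")
          case True then show ?thesis by simp
        next
          case nc: False
          then obtain q where "q \<in> Out_nb G p" by auto
          then have eq: "(p,q) \<in> G" unfolding Out_nb_def by auto
          have "p \<in> Out2_nb G v" using o2 ou True by auto
          then have "green_edge G (p,q)"
            using nb eq vC unfolding blue_edge_of_def by auto
          then obtain s where ss: "s \<in> sources G" and os: "Out_nb G s = {p}"
            using green_src by fastforce
          have "x \<noteq> u" using acyclic_neq[OF ac eu] .
          then have "s \<noteq> v" using os ox True by auto
          moreover have "s \<noteq> x" "s \<noteq> u" using ss nonsource[OF ex] nonsource[OF eu] by auto
          ultimately have "s \<notin> D" unfolding D_def by auto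
          moreover have "p \<noteq> v" using True vs nonsource[OF eu] by auto
          ultimately show ?thesis using ss os by auto
        qed
      qed
    qed
    show False using key_contra[OF slrc m cD _ vs cond] unfolding D_def by auto
  qed
qed



lemma BC_disj: "B_set G \<inter> C1_set G = {}"
  unfolding B_set_def C1_set_def by auto

lemma owners_le:
  fixes C :: "('f::field ^ 'n::finite) set" and G :: "('n \<times> 'n) set"
  assumes slrc: "is_SLRC C k r 3" and m: "is_minimal_repair_graph C r G"
  shows "card {v \<in> B_set G \<union> C1_set G. blue_edge_of G v e} \<le> r"
proof -
  have rep: "is_repair_graph C r G" using m unfolding is_minimal_repair_graph_def by auto
  define Ow where "Ow = {v \<in> B_set G \<union> C1_set G. blue_edge_of G v e}"
  define u where "u = fst e"
  define \<phi> where "\<phi> v = (if v \<in> B_set G then v else the_elem (Out_nb G v))" for v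
  have C1out: "\<exists>x. Out_nb G v = {x}" if "v \<in> C1_set G" for v
    using that unfolding C1_set_def by (auto simp: card_1_singleton_iff)
  have img: "\<phi> v \<in> In_nb G u" if "v \<in> Ow" for v
  proof (cases "v \<in> B_set G")
    case True
    then have "v \<notin> C1_set G" using BC_disj[of G] by blast
    then have "u \<in> Out_nb G v" using that True unfolding Ow_def blue_edge_of_def u_def by auto
    then show ?thesis using True In_Out unfolding \<phi>_def by metis
  next
    case False
    then have vC: "v \<in> C1_set G" using that unfolding Ow_def by auto
    then obtain x where ox: "Out_nb G v = {x}" using C1out by blast
    have "u \<in> Out2_nb G v" using that vC False unfolding Ow_def blue_edge_of_def u_def by auto
    then have "u \<in> Out_nb G x" unfolding Out2_nb_def ox by auto
    then show ?thesis using False ox In_Out unfolding \<phi>_def by (metis the_elem_eq)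
  qed
  have inj: "inj_on \<phi> Ow"
  proof (rule inj_onI)
    fix v1 v2 assume v1: "v1 \<in> Ow" and v2: "v2 \<in> Ow" and eq: "\<phi> v1 = \<phi> v2"
    have s1: "v1 \<in> sources G" and s2: "v2 \<in> sources G"
      using v1 v2 unfolding Ow_def B_set_def C1_set_def by auto
    have nsB: "\<phi> w \<notin> sources G" if "w \<in> Ow" "w \<notin> B_set G" for w
    proof -
      have "w \<in> C1_set G" using that unfolding Ow_def by auto
      then obtain x where ox: "Out_nb G w = {x}" using C1out by blast
      then have "(w,x) \<in> G" unfolding Out_nb_def by auto
      then show ?thesis using nonsource ox that(2) unfolding \<phi>_def by (metis the_elem_eq)
    qed
    show "v1 = v2"
    proof (cases "v1 \<in> B_set G")
      case b1: True
      show ?thesis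
      proof (cases "v2 \<in> B_set G")
        case True then show ?thesis using b1 eq unfolding \<phi>_def by simp
      next
        case False then show ?thesis using nsB[OF v2 False] eq b1 s1 unfolding \<phi>_def by simp
      qed
    next
      case b1: False
      show ?thesis
      proof (cases "v2 \<in> B_set G")
        case True then show ?thesis using nsB[OF v1 b1] eq True s2 unfolding \<phi>_def by simp
      next
        case False
        have "v1 \<in> C1_set G" "v2 \<in> C1_set G" using v1 v2 b1 False unfolding Ow_def by auto
        then obtain x1 x2 where o1: "Out_nb G v1 = {x1}" and o2: "Out_nb G v2 = {x2}"
          using C1out by meson
        then have "x1 = x2" using eq b1 False unfolding \<phi>_def by simp
        then have o2': "Out_nb G v2 = {x1}" using o2 by simp
        show ?thesis
        proof (rule ccontr)
          assume "v1 \<noteq> v2"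
          from two_sources[OF slrc m s1 s2 this o1 o2'] show False .
        qed
      qed
    qed
  qed
  show ?thesis
  proof (cases "Ow = {}")
    case True
    then have "card Ow \<le> r" by simp
    then show ?thesis unfolding Ow_def .
  next
    case False
    then obtain v where "v \<in> Ow" by auto
    then have ne: "In_nb G u \<noteq> {}" using img by auto
    then have "recovering_set C r u (In_nb G u)" using rep unfolding is_repair_graph_def by auto
    then have cr: "card (In_nb G u) \<le> r" unfolding recovering_set_def by auto
    have "card Ow = card (\<phi> ` Ow)" using inj by (simp add: card_image)
    also have "\<dots> \<le> card (In_nb G u)" using img by (intro card_mono) auto
    finally have "card Ow \<le> r" using cr by simp
    then show ?thesis unfolding Ow_def .
  qed
qed

theorem lemma6:
  fixes C :: "('f::field ^ 'n::finite) set" and k r :: nat and G :: "('n \<times> 'n) set"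
  assumes "finite (UNIV :: 'f set)"
    and "is_SLRC C k r 3"
    and "is_minimal_repair_graph C r G"
  shows "real (card (blue_edges G)) \<ge> (real (card (B_set G)) + real (card (C1_set G))) / real r"
proof -
  note slrc = assms(2) and m = assms(3)
  define Ow where "Ow e = {v \<in> B_set G \<union> C1_set G. blue_edge_of G v e}" for e
  have sub: "B_set G \<union> C1_set G \<subseteq> (\<Union>e\<in>blue_edges G. Ow e)"
  proof
    fix v assume v: "v \<in> B_set G \<union> C1_set G"
    then obtain e where "blue_edge_of G v e" using blue_exists[OF slrc m] by blast
    then have "e \<in> blue_edges G" using v unfolding blue_edges_def by blast
    moreover have "v \<in> Ow e" using v \<open>blue_edge_of G v e\<close> unfolding Ow_def by blast
    ultimately show "v \<in> (\<Union>e\<in>blue_edges G. Ow e)" by blast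
  qed
  have "card (B_set G) + card (C1_set G) = card (B_set G \<union> C1_set G)"
    using BC_disj[of G] by (intro card_Un_disjoint[symmetric]) auto
  also have "\<dots> \<le> card (\<Union>e\<in>blue_edges G. Ow e)" using sub by (intro card_mono) auto
  also have "\<dots> \<le> (\<Sum>e\<in>blue_edges G. card (Ow e))" by (rule card_UN_le) simp
  also have "\<dots> \<le> card (blue_edges G) * r"
    using owners_le[OF slrc m] unfolding Ow_def by (intro sum_bounded_above[where K = r, simplified]) auto
  finally have nat: "card (B_set G) + card (C1_set G) \<le> card (blue_edges G) * r" .
  show ?thesis
  proof (cases "r = 0")
    case True then show ?thesis by simp
  next
    case False
    have "real (card (B_set G)) + real (card (C1_set G)) \<le> real (card (blue_edges G)) * real r"
      using nat by (metis of_nat_add of_nat_le_iff of_nat_mult)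
    then show ?thesis using False by (simp add: divide_le_eq)
  qed
qed

end
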